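(* Let $\rho$ be a primitive $k$th root of unity, $0\le a\le k-1$, $L\in\mathbb Z_{\ge1}$, $\delta>0$, $C>0$. For all $N\ge1$ and $z$ with $\mathrm{Re}(z)\le-\delta$, $|z|\le C$, $$-\chi_a(-z,N)=\sum_{\ell=0}^{L}\frac{(-1)^\ell}{\ell!}\Big(\frac{kz}{N}\Big)^{\ell-1}B_\ell(a/k)\,\mathrm{Li}_{2-\ell}(\rho^{-a}e^{z})+O\Big(\frac1{N^L}\Big),$$ with implied constant depending only on $L,k,\delta,C$.
   Context: For $\mathrm{Re}(w)>0$, $\chi_a(w,N):=\sum_{r\ge1}\frac{\rho^{-ra}}{r}\frac{e^{-rw}e^{raw/N}}{e^{krw/N}-1}$. Bernoulli polynomials: $ze^{\lambda z}/(e^z-1)=\sum B_n(\lambda)z^n/n!$. Polylogarithms $\mathrm{Li}_s(u)=\sum_{n\ge1}u^n/n^s$ for $|u|<1$. *)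

theory Defs
  imports "HOL-Analysis.Analysis"
begin

definition primitive_root_of_unity :: "nat \<Rightarrow> complex \<Rightarrow> bool" where
  "primitive_root_of_unity k \<rho> \<longleftrightarrow> k \<ge> 1 \<and> \<rho> ^ k = 1 \<and> (\<forall>j. 0 < j \<and> j < k \<longrightarrow> \<rho> ^ j \<noteq> 1)"

definition bern_gen :: "complex \<Rightarrow> complex \<Rightarrow> complex" where
  "bern_gen lam z = (if z = 0 then 1 else z * exp (lam * z) / (exp z - 1))"

text \<open>Bernoulli polynomials: B_n(lambda) = n-th derivative at 0 of the generating function,
  i.e. z e^(lambda z)/(e^z-1) = sum B_n(lambda) z^n / n!.\<close>
definition bernpoly :: "nat \<Rightarrow> complex \<Rightarrow> complex" where
  "bernpoly n lam = (deriv ^^ n) (bern_gen lam) 0"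

text \<open>Polylogarithm Li_s(u) = sum_{n>=1} u^n / n^s (integer order s, used for abs u < 1).\<close>
definition polylog :: "int \<Rightarrow> complex \<Rightarrow> complex" where
  "polylog s u = (\<Sum>n. u ^ Suc n / (of_nat (Suc n)) powi s)"

definition chi :: "nat \<Rightarrow> complex \<Rightarrow> nat \<Rightarrow> complex \<Rightarrow> nat \<Rightarrow> complex" where
  "chi k \<rho> a w N = (\<Sum>r. (let r' = of_nat (Suc r) :: complex in
      \<rho> powi (- (int (Suc r) * int a)) / r' * exp (- r' * w) * exp (r' * of_nat a * w / of_nat N)
        / (exp (of_nat k * r' * w / of_nat N) - 1)))"

end

theory Submission imports Defs "HOL-Complex_Analysis.Complex_Analysis" "HOL-Real_Asymp.Real_Asymp" begin


lemma summ_pow: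
  fixes x :: real
  assumes x0: "0 \<le> x" and x1: "x < 1"
  shows "summable (\<lambda>n. real (Suc n) ^ m * x ^ Suc n)"
proof (cases "x = 0")
  case True then show ?thesis by simp
next
  case False
  then have xp: "x > 0" using x0 by simp
  define c where "c = (1 + x) / 2"
  have c1: "c < 1" using x1 by (simp add: c_def)
  have cx: "c / x > 1" using x1 xp by (simp add: c_def field_simps)
  have lim: "(\<lambda>n. (real (Suc (Suc n)) / real (Suc n)) ^ m) \<longlonglongrightarrow> 1"
  proof -
    have "(\<lambda>n. real (Suc (Suc n)) / real (Suc n)) \<longlonglongrightarrow> 1" by real_asymp
    from tendsto_power[OF this, of m] show ?thesis by simp
  qed
  from order_tendstoD(2)[OF lim cx] obtain N where
    N: "\<And>n. n \<ge> N \<Longrightarrow> (real (Suc (Suc n)) / real (Suc n)) ^ m < c / x"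
    by (auto simp: eventually_sequentially)
  show ?thesis
  proof (rule summable_ratio_test[OF c1, of N])
    fix n assume "n \<ge> N"
    have e: "real (Suc (Suc n)) ^ m * x ^ Suc (Suc n) =
          ((real (Suc (Suc n)) / real (Suc n)) ^ m * x) * (real (Suc n) ^ m * x ^ Suc n)"
      by (simp add: power_divide field_simps)
    have "(real (Suc (Suc n)) / real (Suc n)) ^ m * x \<le> c"
      using N[OF \<open>n \<ge> N\<close>] xp by (simp add: field_simps)
    then have "((real (Suc (Suc n)) / real (Suc n)) ^ m * x) * (real (Suc n) ^ m * x ^ Suc n)
       \<le> c * (real (Suc n) ^ m * x ^ Suc n)"
      by (rule mult_right_mono) (use x0 in simp)
    then have "real (Suc (Suc n)) ^ m * x ^ Suc (Suc n) \<le> c * (real (Suc n) ^ m * x ^ Suc n)"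
      by (subst e)
    moreover have "norm (real (Suc (Suc n)) ^ m * x ^ Suc (Suc n)) = real (Suc (Suc n)) ^ m * x ^ Suc (Suc n)"
      using x0 by simp
    moreover have "norm (real (Suc n) ^ m * x ^ Suc n) = real (Suc n) ^ m * x ^ Suc n"
      using x0 by simp
    ultimately show "norm (real (Suc (Suc n)) ^ m * x ^ Suc (Suc n)) \<le> c * norm (real (Suc n) ^ m * x ^ Suc n)"
      by simp
  qed
qed

lemma polylog_summable:
  fixes u :: complex
  assumes "cmod u < 1"
  shows "summable (\<lambda>n. u ^ Suc n / (of_nat (Suc n)) powi s)"
proof (rule summable_norm_cancel, rule summable_comparison_test[OF _ summ_pow[of "cmod u" "nat (-s)"]])
  show "\<exists>N. \<forall>n\<ge>N. norm (norm (u ^ Suc n / of_nat (Suc n) powi s)) \<le> real (Suc n) ^ nat (- s) * cmod u ^ Suc n"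
  proof (intro exI allI impI)
    fix n :: nat
    have nr: "norm ((of_nat (Suc n) :: complex) powi s) = real (Suc n) powi s"
      by (simp add: norm_power_int del: of_nat_Suc)
    have "1 / (real (Suc n) powi s) \<le> real (Suc n) ^ nat (- s)"
      by (cases "s \<ge> 0") (auto simp: power_int_def field_simps one_le_power simp del: of_nat_Suc)
    then have "1 / norm ((of_nat (Suc n) :: complex) powi s) \<le> real (Suc n) ^ nat (- s)"
      by (simp only: nr)
    then have "norm (u ^ Suc n) * (1 / norm ((of_nat (Suc n) :: complex) powi s)) \<le> norm (u ^ Suc n) * real (Suc n) ^ nat (- s)"
      by (rule mult_left_mono) simp
    then show "norm (norm (u ^ Suc n / of_nat (Suc n) powi s)) \<le> real (Suc n) ^ nat (- s) * cmod u ^ Suc n"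
      by (simp add: norm_divide norm_power norm_mult field_simps)
  qed
qed (use assms in auto)



lemma exp_ne_1_small:
  fixes z :: complex
  assumes "z \<noteq> 0" "cmod z < 1"
  shows "exp z \<noteq> 1"
proof
  assume "exp z = 1"
  then obtain n :: int where re: "Re z = 0" and im: "Im z = of_int (2 * n) * pi"
    by (auto simp: exp_eq_1)
  have "n \<noteq> 0" using assms(1) re im by (auto simp: complex_eq_iff)
  then have "\<bar>of_int n\<bar> \<ge> (1::real)" by linarith
  then have "\<bar>Im z\<bar> \<ge> 2 * pi" using im by (auto simp: abs_mult)
  moreover have "\<bar>Im z\<bar> \<le> cmod z" by (rule abs_Im_le_cmod)
  ultimately show False using assms(2) pi_gt3 by linarith
qed

lemma bern_gen_lim0: "(bern_gen lam \<longlongrightarrow> 1) (at 0)"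
proof -
  have d: "((\<lambda>y. (exp y - exp 0) / (y - 0)) \<longlongrightarrow> (1::complex)) (at 0)"
    using DERIV_exp[of "0::complex"] unfolding has_field_derivative_iff by simp
  have e: "((\<lambda>y. exp (lam * y)) \<longlongrightarrow> (1::complex)) (at 0)"
  proof -
    have "continuous (at 0) (\<lambda>y::complex. exp (lam * y))" by (intro continuous_intros)
    then show ?thesis by (simp add: continuous_at)
  qed
  have "((\<lambda>y. exp (lam * y) / ((exp y - exp 0) / (y - 0))) \<longlongrightarrow> 1 / 1) (at 0)"
    by (rule tendsto_divide[OF e d]) simp
  moreover have "eventually (\<lambda>y. exp (lam * y) / ((exp y - exp 0) / (y - 0)) = bern_gen lam y) (at 0)"
    unfolding eventually_at_filter by (auto simp: bern_gen_def)
  ultimately show ?thesis by (simp add: tendsto_cong)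
qed

lemma bern_gen_holo: "bern_gen lam holomorphic_on ball 0 1"
proof (rule no_isolated_singularity'[where K = "{0}"])
  fix z :: complex assume "z \<in> {0}"
  then show "(bern_gen lam \<longlongrightarrow> bern_gen lam z) (at z within ball 0 1)"
    using bern_gen_lim0[of lam] by (auto simp: bern_gen_def intro: tendsto_within_subset)
next
  have "(\<lambda>z. z * exp (lam * z) / (exp z - 1)) holomorphic_on (ball 0 1 - {0})"
    by (intro holomorphic_intros) (auto dest: exp_ne_1_small)
  then show "bern_gen lam holomorphic_on (ball 0 1 - {0})"
    by (rule holomorphic_transform) (auto simp: bern_gen_def)
qed auto



lemma bern_taylor_small:
  "\<exists>K\<ge>0. \<forall>s. cmod s \<le> 1/4 \<longrightarrow>
     cmod (bern_gen lam s - (\<Sum>n\<le>L. bernpoly n lam / fact n * s ^ n)) \<le> K * cmod s ^ (L+1)"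
proof -
  define g where "g = bern_gen lam"
  have hol: "g holomorphic_on ball 0 1" unfolding g_def by (rule bern_gen_holo)
  have contf: "continuous_on (cball 0 (1/2)) g"
    by (rule holomorphic_on_imp_continuous_on, rule holomorphic_on_subset[OF hol]) auto
  obtain B where B: "\<And>x. x \<in> cball 0 (1/2) \<Longrightarrow> norm (g x) \<le> B"
    using compact_imp_bounded[OF compact_continuous_image[OF contf compact_cball]]
    unfolding bounded_iff by (metis (no_types, lifting) image_eqI)
  have B0: "B \<ge> 0" using B[of 0] by (auto intro: order_trans[OF norm_ge_zero])
  have coef: "norm (bernpoly n lam / fact n) \<le> B * 2 ^ n" for n
  proof -
    have "norm ((deriv ^^ n) g 0) \<le> fact n * B / (1/2) ^ n"
      by (rule Cauchy_inequality[OF holomorphic_on_subset[OF hol] contf])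
         (auto intro!: B simp: dist_norm)
    then show ?thesis
      by (simp add: bernpoly_def g_def norm_divide field_simps power_divide)
  qed
  show ?thesis
  proof (intro exI[of _ "B * 2 ^ (L+2)"] conjI allI impI)
    show "B * 2 ^ (L+2) \<ge> 0" using B0 by simp
    fix s :: complex assume s: "cmod s \<le> 1/4"
    have "s \<in> ball 0 1" using s by auto
    from holomorphic_power_series[OF hol this]
    have "(\<lambda>n. bernpoly n lam / fact n * s ^ n) sums g s"
      by (simp add: bernpoly_def g_def)
    from sums_split_initial_segment[OF this, of "Suc L"]
    have sm: "(\<lambda>i. bernpoly (i + Suc L) lam / fact (i + Suc L) * s ^ (i + Suc L)) sums
               (g s - (\<Sum>n\<le>L. bernpoly n lam / fact n * s ^ n))"
      by (simp add: lessThan_Suc_atMost)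
    define A where "A = B * 2 ^ Suc L * cmod s ^ Suc L"
    have bnd: "norm (bernpoly (i + Suc L) lam / fact (i + Suc L) * s ^ (i + Suc L)) \<le> A * (1/2) ^ i" for i
    proof -
      have "norm (bernpoly (i + Suc L) lam / fact (i + Suc L) * s ^ (i + Suc L))
          \<le> B * 2 ^ (i + Suc L) * cmod s ^ (i + Suc L)"
        unfolding norm_mult norm_power by (rule mult_right_mono[OF coef]) simp
      also have "\<dots> = A * (2 * cmod s) ^ i" by (simp add: A_def power_add power_mult_distrib)
      also have "\<dots> \<le> A * (1/2) ^ i"
        by (rule mult_left_mono, rule power_mono) (use s B0 in \<open>auto simp: A_def\<close>)
      finally show ?thesis .
    qed
    have gs: "(\<lambda>i. A * (1/2) ^ i) sums (A * 2)"
      using sums_mult[OF geometric_sums[of "1/2::real"], of A] by simp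
    have "cmod (g s - (\<Sum>n\<le>L. bernpoly n lam / fact n * s ^ n)) \<le> A * 2"
      using norm_suminf_le[OF bnd sums_summable[OF gs]] sums_unique[OF sm] sums_unique[OF gs] by simp
    then show "cmod (bern_gen lam s - (\<Sum>n\<le>L. bernpoly n lam / fact n * s ^ n)) \<le> B * 2 ^ (L+2) * cmod s ^ (L+1)"
      by (simp add: A_def g_def)
  qed
qed



lemma pow_le_big:
  fixes y :: real
  assumes y: "y \<ge> 1/4" and n: "n \<le> m"
  shows "y ^ n \<le> 4 ^ m * y ^ m"
proof -
  obtain d where m: "m = n + d" using n le_Suc_ex by blast
  have y0: "y > 0" using y by simp
  have d1: "(4*y)^d \<ge> 1" by (rule one_le_power) (use y in simp)
  have eq: "4^m*y^m = 4^n * y^n * (4*y)^d" by (simp add: m power_mult_distrib power_add)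
  have "4^n * y^n * (4*y)^d \<ge> 4^n * y^n * 1"
    by (rule mult_left_mono[OF d1]) (use y0 in simp)
  moreover have "4^n * y^n * 1 \<ge> 1 * y ^ n"
    using mult_right_mono[of 1 "4^n" "y^n"] y0 by simp
  ultimately have "1 * y ^ n \<le> 4^n * y^n * (4*y)^d" by (rule order_trans[rotated])
  then show ?thesis by (simp only: eq)
qed

lemma bern_gen_large:
  fixes l c :: real and s :: complex
  assumes c: "c > 0" and l: "l \<le> 1" and s0: "s \<noteq> 0" and sec: "Re s \<ge> c * cmod s" and big: "cmod s \<ge> 1/4"
  shows "cmod (bern_gen (of_real l) s) \<le> (1 + 4 / c) * cmod s"
proof -
  define x where "x = Re s"
  have "c * (1/4) \<le> c * cmod s" by (rule mult_left_mono[OF big]) (use c in simp)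
  then have x: "x \<ge> c / 4" using sec unfolding x_def by simp
  have xp: "x > 0" using x c by simp
  have e1: "cmod (exp (of_real l * s)) \<le> exp x"
    using l xp by (simp add: x_def mult_right_mono[of l 1 "Re s"] less_imp_le)
  have e2: "cmod (exp s - 1) \<ge> exp x - 1"
    using norm_triangle_ineq2[of "exp s" 1] by (simp add: x_def)
  have ex: "exp x - 1 \<ge> x" using exp_ge_add_one_self[of x] by linarith
  have ratio: "exp x / (exp x - 1) \<le> 1 + 4 / c"
  proof -
    have "exp x / (exp x - 1) = 1 + 1 / (exp x - 1)" using ex xp by (simp add: field_simps)
    also have "1 / (exp x - 1) \<le> 1 / x" using ex xp by (intro divide_left_mono) auto
    also have "1 / x \<le> 4 / c" using x c xp by (simp add: field_simps)
    finally show ?thesis by simp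
  qed
  have "cmod (bern_gen (of_real l) s) = cmod s * cmod (exp (of_real l * s)) / cmod (exp s - 1)"
    using s0 by (simp add: bern_gen_def norm_divide norm_mult)
  also have "\<dots> \<le> cmod s * exp x / (exp x - 1)"
    using e1 e2 ex xp
    by (intro frac_le mult_left_mono) auto
  also have "\<dots> = cmod s * (exp x / (exp x - 1))" by simp
  also have "\<dots> \<le> cmod s * (1 + 4 / c)" by (rule mult_left_mono[OF ratio]) simp
  finally show ?thesis by (simp add: mult.commute)
qed

lemma bern_sector:
  fixes l c :: real
  assumes c: "c > 0" and l: "l \<le> 1"
  shows "\<exists>K\<ge>0. \<forall>s. s \<noteq> 0 \<longrightarrow> Re s \<ge> c * cmod s \<longrightarrow>
     cmod (bern_gen (of_real l) s - (\<Sum>n\<le>L. bernpoly n (of_real l) / fact n * s ^ n)) \<le> K * cmod s ^ (L+1)"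
proof -
  obtain K1 where K1: "K1 \<ge> 0" and K1b: "\<And>s. cmod s \<le> 1/4 \<Longrightarrow>
     cmod (bern_gen (of_real l) s - (\<Sum>n\<le>L. bernpoly n (of_real l) / fact n * s ^ n)) \<le> K1 * cmod s ^ (L+1)"
    using bern_taylor_small[of "of_real l" L] by blast
  define K2 where "K2 = (1 + 4 / c) * 4 ^ (L+1) + (\<Sum>n\<le>L. cmod (bernpoly n (of_real l) / fact n)) * 4 ^ (L+1)"
  have K2: "K2 \<ge> 0" unfolding K2_def using c by (intro add_nonneg_nonneg mult_nonneg_nonneg sum_nonneg) auto
  show ?thesis
  proof (intro exI[of _ "K1 + K2"] conjI allI impI)
    show "K1 + K2 \<ge> 0" using K1 K2 by simp
    fix s :: complex assume s0: "s \<noteq> 0" and sec: "Re s \<ge> c * cmod s"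
    let ?P = "\<Sum>n\<le>L. bernpoly n (of_real l) / fact n * s ^ n"
    let ?E = "cmod (bern_gen (of_real l) s - ?P)"
    show "?E \<le> (K1 + K2) * cmod s ^ (L+1)"
    proof (cases "cmod s \<le> 1/4")
      case True
      then have "?E \<le> K1 * cmod s ^ (L+1)" by (rule K1b)
      also have "\<dots> \<le> (K1 + K2) * cmod s ^ (L+1)" using K2 by (simp add: mult_right_mono)
      finally show ?thesis .
    next
      case False
      then have big: "cmod s \<ge> 1/4" by simp
      have g: "cmod (bern_gen (of_real l) s) \<le> (1 + 4 / c) * 4 ^ (L+1) * cmod s ^ (L+1)"
      proof -
        have "cmod (bern_gen (of_real l) s) \<le> (1 + 4 / c) * cmod s"
          by (rule bern_gen_large[OF c l s0 sec big])
        also have "\<dots> \<le> (1 + 4 / c) * (4 ^ (L+1) * cmod s ^ (L+1))"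
          using pow_le_big[OF big, of 1 "L+1"] c by (intro mult_left_mono) auto
        finally show ?thesis by simp
      qed
      have p: "cmod ?P \<le> (\<Sum>n\<le>L. cmod (bernpoly n (of_real l) / fact n)) * 4 ^ (L+1) * cmod s ^ (L+1)"
      proof -
        have "cmod ?P \<le> (\<Sum>n\<le>L. cmod (bernpoly n (of_real l) / fact n) * cmod s ^ n)"
          by (rule order_trans[OF norm_sum], rule sum_mono) (simp add: norm_mult norm_power norm_divide)
        also have "\<dots> \<le> (\<Sum>n\<le>L. cmod (bernpoly n (of_real l) / fact n) * (4 ^ (L+1) * cmod s ^ (L+1)))"
          by (intro sum_mono mult_left_mono pow_le_big[OF big]) auto
        also have "\<dots> = (\<Sum>n\<le>L. cmod (bernpoly n (of_real l) / fact n)) * 4 ^ (L+1) * cmod s ^ (L+1)"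
          by (simp add: sum_distrib_right mult.assoc)
        finally show ?thesis .
      qed
      have "?E \<le> cmod (bern_gen (of_real l) s) + cmod ?P" by (rule norm_triangle_ineq4)
      also have "\<dots> \<le> K2 * cmod s ^ (L+1)" using g p by (simp add: K2_def distrib_right)
      also have "\<dots> \<le> (K1 + K2) * cmod s ^ (L+1)" using K1 by (simp add: mult_right_mono)
      finally show ?thesis .
    qed
  qed
qed



lemma core:
  fixes k L a N :: nat and \<delta> C K :: real and \<rho> z :: complex
  defines "lam \<equiv> (of_nat a / of_nat k :: complex)"
  defines "S \<equiv> (\<Sum>r. real (Suc r) ^ (L - 1) * exp (-\<delta>) ^ Suc r)"
  assumes k: "k \<ge> 1" and L: "L \<ge> 1" and \<delta>: "\<delta> > 0" and C: "C > 0" and K: "K \<ge> 0"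
    and Kb: "\<And>s. s \<noteq> 0 \<Longrightarrow> Re s \<ge> (\<delta>/C) * cmod s \<Longrightarrow>
       cmod (bern_gen lam s - (\<Sum>n\<le>L. bernpoly n lam / fact n * s ^ n)) \<le> K * cmod s ^ (L+1)"
    and \<rho>: "primitive_root_of_unity k \<rho>" and N: "N \<ge> 1" and zr: "Re z \<le> - \<delta>" and zC: "cmod z \<le> C"
  shows "cmod (- chi k \<rho> a (- z) N
       - (\<Sum>l\<le>L. (-1) ^ l / of_nat (fact l) * (of_nat k * z / of_nat N) powi (int l - 1)
              * bernpoly l (of_nat a / of_nat k) * polylog (2 - int l) (\<rho> powi (- int a) * exp z)))
    \<le> K * (real k * C) ^ L * S / real N ^ L"
proof -
  have \<rho>1: "cmod \<rho> = 1"
  proof -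
    have "cmod \<rho> ^ k = 1" using \<rho> by (simp add: primitive_root_of_unity_def flip: norm_power)
    then show ?thesis using k power_eq_imp_eq_base[of "cmod \<rho>" k 1] by simp
  qed
  have \<rho>0: "\<rho> \<noteq> 0" using \<rho>1 by auto
  have z0: "z \<noteq> 0" using zr \<delta> by auto
  have k0: "(of_nat k :: complex) \<noteq> 0" using k by simp
  have N0: "(of_nat N :: complex) \<noteq> 0" using N by simp
  define t where "t = of_nat k * z / of_nat N"
  have t0: "t \<noteq> 0" using z0 k0 N0 by (simp add: t_def)
  define u where "u = \<rho> powi (- int a) * exp z"
  have u1: "cmod u < 1"
  proof -
    have "cmod u = exp (Re z)" using \<rho>1 by (simp add: u_def norm_mult norm_power_int)
    also have "\<dots> < 1" using zr \<delta> by simp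
    finally show ?thesis .
  qed
  define R where "R r = (of_nat (Suc r) :: complex)" for r
  define s where "s r = - R r * t" for r
  define X where "X r = \<rho> powi (- (int (Suc r) * int a)) * exp (R r * z)" for r
  define P where "P w = (\<Sum>n\<le>L. bernpoly n lam / fact n * w ^ n)" for w
  define T where "T r = (let r' = of_nat (Suc r) :: complex in
      \<rho> powi (- (int (Suc r) * int a)) / r' * exp (- r' * (-z)) * exp (r' * of_nat a * (-z) / of_nat N)
        / (exp (of_nat k * r' * (-z) / of_nat N) - 1))" for r
  define cf where "cf l = (-1) ^ l / of_nat (fact l) * t powi (int l - 1) * bernpoly l lam" for l
  define f where "f l r = u ^ Suc r / (of_nat (Suc r)) powi (2 - int l)" for l r
  define B where "B r = (\<Sum>l\<le>L. cf l * f l r)" for r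
  have R0: "R r \<noteq> 0" for r unfolding R_def by (simp only: of_nat_eq_0_iff)
  have s0: "s r \<noteq> 0" for r using R0 t0 by (simp add: s_def)
  have Aeq: "- T r = - (X r / R r) * (bern_gen lam (s r) / s r)" for r
  proof -
    have e1: "of_nat (Suc r) * of_nat a * (-z) / of_nat N = lam * s r"
      using k0 N0 by (simp add: lam_def s_def t_def R_def field_simps)
    have e2: "of_nat k * of_nat (Suc r) * (-z) / of_nat N = s r"
      using k0 N0 by (simp add: s_def t_def R_def field_simps)
    have e0: "- of_nat (Suc r) * (-z) = R r * z" by (simp add: R_def algebra_simps)
    have "T r = X r / R r * (exp (lam * s r) / (exp (s r) - 1))"
      unfolding T_def Let_def e0 e1 e2 by (simp add: X_def R_def)
    also have "exp (lam * s r) / (exp (s r) - 1) = bern_gen lam (s r) / s r"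
      using s0[of r] by (simp add: bern_gen_def)
    finally show ?thesis by simp
  qed
  have Beq: "B r = - (X r / R r) * (P (s r) / s r)" for r
  proof -
    have tm: "cf l * f l r = - (X r / R r) * (bernpoly l lam / fact l * s r ^ l / s r)" for l
    proof -
      have pu: "u ^ Suc r = X r"
      proof -
        have "\<rho> powi (- (int (Suc r) * int a)) = (\<rho> powi (- int a)) ^ Suc r"
          by (metis mult.commute mult_minus_left power_int_mult power_int_of_nat)
        moreover have "exp z ^ Suc r = exp (R r * z)"
          unfolding R_def by (simp only: exp_of_nat_mult)
        ultimately show ?thesis by (simp add: u_def X_def power_mult_distrib)
      qed
      have tp: "t powi (int l - 1) = t ^ l / t" using t0 by (simp add: power_int_diff)
      have rp: "(of_nat (Suc r) :: complex) powi (2 - int l) = R r ^ 2 / R r ^ l"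
        using R0[of r] by (simp add: power_int_diff R_def)
      show ?thesis
        unfolding cf_def f_def tp rp pu s_def
        using R0[of r] t0
        by (simp add: field_simps power_mult_distrib power2_eq_square power_minus[of "t * R r"])
    qed
    have "B r = (\<Sum>l\<le>L. - (X r / R r) * (bernpoly l lam / fact l * s r ^ l / s r))"
      unfolding B_def using tm by simp
    also have "\<dots> = - (X r / R r) * (P (s r) / s r)"
      by (simp add: P_def sum_distrib_left sum_divide_distrib)
    finally show ?thesis .
  qed
  have diff: "- T r - B r = - (X r / R r) * ((bern_gen lam (s r) - P (s r)) / s r)" for r
    unfolding Aeq[symmetric] Beq by (simp add: Aeq diff_divide_distrib right_diff_distrib)
  obtain L' where L': "L = Suc L'" using L by (cases L) auto
  define q where "q = real k * C / real N"
  have q0: "q \<ge> 0" using C by (simp add: q_def)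
  define bnd where "bnd r = K * q ^ L * (real (Suc r) ^ (L - 1) * exp (-\<delta>) ^ Suc r)" for r
  have bound: "norm (- T r - B r) \<le> bnd r" for r
  proof -
    have Rez: "norm (exp (R r * z)) = exp (real (Suc r) * Re z)" by (simp add: R_def)
    have Rr: "norm (\<rho> powi (- (int (Suc r) * int a))) = 1" using \<rho>1 by (simp add: norm_power_int)
    have nX: "norm (X r) \<le> exp (-\<delta>) ^ Suc r"
    proof -
      have "norm (X r) = exp (real (Suc r) * Re z)"
        unfolding X_def norm_mult Rez Rr by simp
      also have "\<dots> \<le> exp (real (Suc r) * (-\<delta>))"
        using zr by (intro exp_mono mult_left_mono) auto
      also have "\<dots> = exp (-\<delta>) ^ Suc r" by (simp only: exp_of_nat_mult)
      finally show ?thesis .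
    qed
    have nR: "norm (R r) = real (Suc r)" by (simp only: R_def norm_of_nat)
    have ns: "norm (s r) = real (Suc r) * q * (cmod z / C)"
      using C by (simp add: s_def t_def q_def R_def norm_mult norm_divide norm_minus_cancel del: of_nat_Suc)
    have ns_le: "norm (s r) \<le> real (Suc r) * q"
    proof -
      have "cmod z / C \<le> 1" using zC C by simp
      then have "real (Suc r) * q * (cmod z / C) \<le> real (Suc r) * q * 1"
        using q0 by (intro mult_left_mono) auto
      then show ?thesis unfolding ns by simp
    qed
    have Res: "Re (s r) = real (Suc r) * q * (- Re z / C)"
      using C by (simp add: s_def t_def q_def R_def del: of_nat_Suc)
    have sec: "Re (s r) \<ge> (\<delta>/C) * norm (s r)"
    proof -
      have "cmod z / C \<le> 1" using zC C by simp
      then have "(\<delta>/C) * (cmod z / C) \<le> (\<delta> / C) * 1"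
        using C \<delta> by (intro mult_left_mono) auto
      also have "\<dots> \<le> - Re z / C" using divide_right_mono[of \<delta> "- Re z" C] zr C by simp
      finally have "(\<delta>/C) * (cmod z / C) \<le> - Re z / C" .
      then have "real (Suc r) * q * ((\<delta>/C) * (cmod z / C)) \<le> real (Suc r) * q * (- Re z / C)"
        using q0 by (intro mult_left_mono) auto
      then show ?thesis unfolding Res ns by (simp add: ac_simps)
    qed
    have KB: "norm (bern_gen lam (s r) - P (s r)) \<le> K * norm (s r) ^ (L+1)"
      unfolding P_def by (rule Kb[OF s0 sec])
    have sp: "norm (s r) > 0" using s0 by simp
    have KB2: "norm ((bern_gen lam (s r) - P (s r)) / s r) \<le> K * (real (Suc r) ^ L * q ^ L)"
    proof -
      have "norm ((bern_gen lam (s r) - P (s r)) / s r) \<le> K * norm (s r) ^ (L+1) / norm (s r)"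
        unfolding norm_divide using sp by (intro divide_right_mono KB) auto
      also have "\<dots> = K * norm (s r) ^ L" using sp by (simp add: field_simps)
      also have "\<dots> \<le> K * (real (Suc r) * q) ^ L"
        using K by (intro mult_left_mono power_mono ns_le) auto
      finally show ?thesis by (simp add: power_mult_distrib)
    qed
    have "norm (- T r - B r) = norm (X r) / real (Suc r) * norm ((bern_gen lam (s r) - P (s r)) / s r)"
      unfolding diff by (simp add: norm_mult norm_divide nR del: of_nat_Suc)
    also have "\<dots> \<le> exp (-\<delta>) ^ Suc r / real (Suc r) * (K * (real (Suc r) ^ L * q ^ L))"
      using nX KB2 by (intro mult_mono divide_right_mono) auto
    also have "\<dots> = bnd r" unfolding bnd_def L' by (simp add: field_simps del: of_nat_Suc)
    finally show ?thesis .
  qed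
  have sbnd: "summable bnd"
    unfolding bnd_def by (intro summable_mult summ_pow) (use \<delta> in auto)
  have sD: "summable (\<lambda>r. - T r - B r)"
    by (rule summable_comparison_test'[OF sbnd]) (rule bound)
  have sf: "summable (f l)" for l unfolding f_def by (rule polylog_summable[OF u1])
  have sB: "summable B" unfolding B_def by (intro summable_sum summable_mult sf)
  have sT: "summable T"
  proof -
    have "summable (\<lambda>r. - ((- T r - B r) + B r))" by (intro summable_minus summable_add sD sB)
    then show ?thesis by simp
  qed
  have chi_eq: "chi k \<rho> a (- z) N = suminf T" unfolding chi_def T_def ..
  have pol_eq: "(\<Sum>l\<le>L. (-1) ^ l / of_nat (fact l) * (of_nat k * z / of_nat N) powi (int l - 1)
              * bernpoly l (of_nat a / of_nat k) * polylog (2 - int l) (\<rho> powi (- int a) * exp z)) = suminf B"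
  proof -
    have "(\<Sum>l\<le>L. (-1) ^ l / of_nat (fact l) * (of_nat k * z / of_nat N) powi (int l - 1)
              * bernpoly l (of_nat a / of_nat k) * polylog (2 - int l) (\<rho> powi (- int a) * exp z))
        = (\<Sum>l\<le>L. cf l * polylog (2 - int l) u)"
      by (simp add: cf_def t_def lam_def u_def)
    also have "\<dots> = (\<Sum>l\<le>L. cf l * suminf (f l))"
      unfolding polylog_def f_def[abs_def] ..
    also have "\<dots> = (\<Sum>l\<le>L. suminf (\<lambda>r. cf l * f l r))"
      by (intro sum.cong refl suminf_mult[symmetric] sf)
    also have "\<dots> = suminf B"
      unfolding B_def by (rule suminf_sum[symmetric]) (intro summable_mult sf)
    finally show ?thesis .
  qed
  have "- chi k \<rho> a (- z) N - (\<Sum>l\<le>L. (-1) ^ l / of_nat (fact l) * (of_nat k * z / of_nat N) powi (int l - 1)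
              * bernpoly l (of_nat a / of_nat k) * polylog (2 - int l) (\<rho> powi (- int a) * exp z))
      = (\<Sum>r. - T r - B r)"
    unfolding chi_eq pol_eq using suminf_diff[OF summable_minus[OF sT] sB] suminf_minus[OF sT] by simp
  moreover have "norm (\<Sum>r. - T r - B r) \<le> suminf bnd"
    by (rule norm_suminf_le[OF bound sbnd])
  moreover have "suminf bnd = K * (real k * C) ^ L * S / real N ^ L"
    unfolding bnd_def S_def
    by (subst suminf_mult) (use summ_pow[of "exp (-\<delta>)" "L - 1"] \<delta> in \<open>auto simp: q_def power_divide\<close>)
  ultimately show ?thesis by simp
qed

theorem proposition4p3:
  fixes k L :: nat and \<delta> C :: real
  assumes "k \<ge> 1" and "L \<ge> 1" and "\<delta> > 0" and "C > 0"
  shows "\<exists>M::real. \<forall>\<rho> a N z.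
    primitive_root_of_unity k \<rho> \<longrightarrow> a \<le> k - 1 \<longrightarrow> N \<ge> 1 \<longrightarrow> Re z \<le> - \<delta> \<longrightarrow> cmod z \<le> C \<longrightarrow>
    cmod (- chi k \<rho> a (- z) N
       - (\<Sum>l\<le>L. (-1) ^ l / of_nat (fact l) * (of_nat k * z / of_nat N) powi (int l - 1)
              * bernpoly l (of_nat a / of_nat k) * polylog (2 - int l) (\<rho> powi (- int a) * exp z)))
    \<le> M / real N ^ L"
proof -
  have ex: "\<forall>a. \<exists>K\<ge>0. a \<le> k - 1 \<longrightarrow> (\<forall>s. s \<noteq> 0 \<longrightarrow> Re s \<ge> (\<delta>/C) * cmod s \<longrightarrow>
     cmod (bern_gen (of_nat a / of_nat k) s - (\<Sum>n\<le>L. bernpoly n (of_nat a / of_nat k) / fact n * s ^ n))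
       \<le> K * cmod s ^ (L+1))"
  proof
    fix a
    show "\<exists>K\<ge>0. a \<le> k - 1 \<longrightarrow> (\<forall>s. s \<noteq> 0 \<longrightarrow> Re s \<ge> (\<delta>/C) * cmod s \<longrightarrow>
     cmod (bern_gen (of_nat a / of_nat k) s - (\<Sum>n\<le>L. bernpoly n (of_nat a / of_nat k) / fact n * s ^ n))
       \<le> K * cmod s ^ (L+1))"
    proof (cases "a \<le> k - 1")
      case True
      then have l1: "real a / real k \<le> 1" using assms(1) by simp
      have c: "\<delta> / C > 0" using assms by simp
      have eq: "(of_real (real a / real k) :: complex) = of_nat a / of_nat k" by simp
      from bern_sector[OF c l1, of L] show ?thesis unfolding eq by blast
    qed auto
  qed
  then obtain Kf where Kf: "\<And>a. Kf a \<ge> 0" and Kfb: "\<And>a s. a \<le> k - 1 \<Longrightarrow> s \<noteq> 0 \<Longrightarrow> Re s \<ge> (\<delta>/C) * cmod s \<Longrightarrow>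
     cmod (bern_gen (of_nat a / of_nat k) s - (\<Sum>n\<le>L. bernpoly n (of_nat a / of_nat k) / fact n * s ^ n))
       \<le> Kf a * cmod s ^ (L+1)"
    by metis
  define K where "K = (\<Sum>a<k. Kf a)"
  have K0: "K \<ge> 0" unfolding K_def using Kf by (simp add: sum_nonneg)
  have Kge: "Kf a \<le> K" if "a \<le> k - 1" for a
    unfolding K_def using that assms(1) Kf by (intro member_le_sum) auto
  define S where "S = (\<Sum>r. real (Suc r) ^ (L - 1) * exp (-\<delta>) ^ Suc r)"
  show ?thesis
  proof (intro exI[of _ "K * (real k * C) ^ L * S"] allI impI)
    fix \<rho> z :: complex and a N :: nat
    assume \<rho>: "primitive_root_of_unity k \<rho>" and a: "a \<le> k - 1" and N: "N \<ge> 1"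
      and zr: "Re z \<le> - \<delta>" and zC: "cmod z \<le> C"
    have Kb: "cmod (bern_gen (of_nat a / of_nat k) s - (\<Sum>n\<le>L. bernpoly n (of_nat a / of_nat k) / fact n * s ^ n))
       \<le> K * cmod s ^ (L+1)" if "s \<noteq> 0" "Re s \<ge> (\<delta>/C) * cmod s" for s
      using Kfb[OF a that] Kge[OF a] by (meson mult_right_mono norm_ge_zero order_trans zero_le_power)
    show "cmod (- chi k \<rho> a (- z) N
       - (\<Sum>l\<le>L. (-1) ^ l / of_nat (fact l) * (of_nat k * z / of_nat N) powi (int l - 1)
              * bernpoly l (of_nat a / of_nat k) * polylog (2 - int l) (\<rho> powi (- int a) * exp z)))
    \<le> K * (real k * C) ^ L * S / real N ^ L"
      unfolding S_def
      by (rule core[OF assms K0 _ \<rho> N zr zC]) (rule Kb)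
  qed
qed

end
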